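(* Let $(A,C,k)$ be an instance and $W$ an affordable committee. Let $\overline{W}$ be obtained from $W$ by seq-CC completion. Then the representation ratio of $\overline{W}$ is at least $1-\frac1e$.
   Context: An instance $(A,C,k)$ consists of a finite nonempty candidate set $C$, voters $N=\{1,\dots,n\}$, approval sets $A_i\subseteq C$, and a committee size $1\le k\le|C|$. A committee is $W\subseteq C$ with $|W|\le k$. $\mathrm{cov}(W)=|\{i: A_i\cap W\ne\emptyset\}|$; the representation ratio is $\mathrm{cov}(W)/\max\{\mathrm{cov}(W'):|W'|=k\}$. The seq-CC completion of $W$ repeatedly adds to the current committee a candidate $c$ not in it that maximizes $\mathrm{cov}$ of the committee with $c$ added (ties arbitrary), until the committee has size $k$. $W$ is affordable if there are $p_i:C\to\mathbb{R}_{\ge0}$ ($i\in N$) with $p_i(c)=0$ for $c\notin A_i$, $\sum_c p_i(c)\le k/n$, $\sum_i p_i(c)=1$ for $c\in W$, $\sum_i p_i(c)=0$ for $c\notin W$. *)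

theory Defs
  imports Complex_Main
begin

text \<open>Voters are 1..n; A i is the approval set of voter i; C the candidate set.\<close>

definition cov :: "(nat \<Rightarrow> 'c set) \<Rightarrow> nat \<Rightarrow> 'c set \<Rightarrow> nat" where
  "cov A n W = card {i \<in> {1..n}. A i \<inter> W \<noteq> {}}"

definition opt_cov :: "(nat \<Rightarrow> 'c set) \<Rightarrow> nat \<Rightarrow> 'c set \<Rightarrow> nat \<Rightarrow> nat" where
  "opt_cov A n C k = Max ((\<lambda>W. cov A n W) ` {W. W \<subseteq> C \<and> card W = k})"

definition affordable :: "(nat \<Rightarrow> 'c set) \<Rightarrow> nat \<Rightarrow> 'c set \<Rightarrow> nat \<Rightarrow> 'c set \<Rightarrow> bool" where
  "affordable A n C k W \<longleftrightarrow>
     (\<exists>p :: nat \<Rightarrow> 'c \<Rightarrow> real.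
        (\<forall>i\<in>{1..n}. \<forall>c\<in>C. p i c \<ge> 0) \<and>
        (\<forall>i\<in>{1..n}. \<forall>c\<in>C. c \<notin> A i \<longrightarrow> p i c = 0) \<and>
        (\<forall>i\<in>{1..n}. (\<Sum>c\<in>C. p i c) \<le> real k / real n) \<and>
        (\<forall>c\<in>W. (\<Sum>i\<in>{1..n}. p i c) = 1) \<and>
        (\<forall>c\<in>C - W. (\<Sum>i\<in>{1..n}. p i c) = 0))"

text \<open>seqcc_completion A n C k W W': W' is a possible outcome (any tie-breaking)
  of the seq-CC completion started at W.\<close>
inductive seqcc_completion :: "(nat \<Rightarrow> 'c set) \<Rightarrow> nat \<Rightarrow> 'c set \<Rightarrow> nat \<Rightarrow> 'c set \<Rightarrow> 'c set \<Rightarrow> bool"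
  for A n C k where
  finish: "card W = k \<Longrightarrow> seqcc_completion A n C k W W"
| step: "card W < k \<Longrightarrow> c \<in> C - W \<Longrightarrow>
         (\<forall>d\<in>C - W. cov A n (insert d W) \<le> cov A n (insert c W)) \<Longrightarrow>
         seqcc_completion A n C k (insert c W) W' \<Longrightarrow>
         seqcc_completion A n C k W W'"

end

theory Submission
  imports Defs
begin

lemma cov_le_n: "cov A n S \<le> n"
proof -
  have "cov A n S \<le> card {1..n}" unfolding cov_def by (rule card_mono) auto
  thus ?thesis by simp
qed

lemma cov_mono: "S \<subseteq> T \<Longrightarrow> cov A n S \<le> cov A n T"
  unfolding cov_def by (rule card_mono) auto

lemma gain_nat:
  assumes "finite Ob" "card Ob = k" "c \<in> C - S" "Ob \<subseteq> C"
    and "\<forall>d\<in>C - S. cov A n (insert d S) \<le> cov A n (insert c S)"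
  shows "cov A n Ob \<le> cov A n S + k * (cov A n (insert c S) - cov A n S)"
proof -
  define V where "V = (\<lambda>S. {i \<in> {1..n}. A i \<inter> S \<noteq> {}})"
  have fin: "\<And>S. finite (V S)" unfolding V_def by simp
  have cv: "\<And>S. cov A n S = card (V S)" unfolding V_def cov_def by simp
  have sub: "V Ob \<subseteq> V S \<union> (\<Union>x\<in>Ob - S. V (insert x S) - V S)"
    unfolding V_def by blast
  have "V S \<union> (\<Union>x\<in>Ob - S. V (insert x S) - V S) \<subseteq> {1..n}"
    unfolding V_def by blast
  hence finU: "finite (V S \<union> (\<Union>x\<in>Ob - S. V (insert x S) - V S))"
    using finite_subset by blast
  have "card (V Ob) \<le> card (V S \<union> (\<Union>x\<in>Ob - S. V (insert x S) - V S))"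
    by (rule card_mono[OF finU sub])
  also have "\<dots> \<le> card (V S) + card (\<Union>x\<in>Ob - S. V (insert x S) - V S)"
    by (rule card_Un_le)
  also have "card (\<Union>x\<in>Ob - S. V (insert x S) - V S) \<le> (\<Sum>x\<in>Ob - S. card (V (insert x S) - V S))"
    by (rule card_UN_le) (simp add: assms(1))
  also have "\<dots> \<le> (\<Sum>x\<in>Ob - S. cov A n (insert c S) - cov A n S)"
  proof (rule sum_mono)
    fix x assume x: "x \<in> Ob - S"
    have "V S \<subseteq> V (insert x S)" unfolding V_def by blast
    hence "card (V (insert x S) - V S) = card (V (insert x S)) - card (V S)"
      by (simp add: card_Diff_subset fin)
    also have "\<dots> = cov A n (insert x S) - cov A n S" by (simp add: cv)
    also have "\<dots> \<le> cov A n (insert c S) - cov A n S"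
    proof -
      have "x \<in> C - S" using x assms(4) by blast
      hence "cov A n (insert x S) \<le> cov A n (insert c S)" using assms(5) by blast
      thus ?thesis by (rule diff_le_mono)
    qed
    finally show "card (V (insert x S) - V S) \<le> cov A n (insert c S) - cov A n S" .
  qed
  also have "\<dots> = card (Ob - S) * (cov A n (insert c S) - cov A n S)" by simp
  also have "\<dots> \<le> k * (cov A n (insert c S) - cov A n S)"
  proof (rule mult_right_mono)
    show "card (Ob - S) \<le> k" using card_mono[OF assms(1), of "Ob - S"] assms(2) by blast
  qed simp
  finally show ?thesis by (simp add: cv)
qed

lemma Max_opt:
  assumes "finite C" "k \<le> card C"
  shows "\<exists>Ob. Ob \<subseteq> C \<and> card Ob = k \<and> cov A n Ob = opt_cov A n C k"
proof -
  let ?F = "{W. W \<subseteq> C \<and> card W = k}"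
  have "?F \<subseteq> Pow C" by blast
  moreover have "finite (Pow C)" using assms(1) by simp
  ultimately have f: "finite ?F" by (rule finite_subset)
  obtain Ob0 where o1: "Ob0 \<subseteq> C" and o2: "card Ob0 = k"
    by (rule obtain_subset_with_card_n[OF assms(2)])
  have "Ob0 \<in> ?F" using o1 o2 by simp
  hence ne: "?F \<noteq> {}" by (rule ex_in_conv[THEN iffD1, OF exI])
  have "opt_cov A n C k \<in> (\<lambda>W. cov A n W) ` ?F"
  proof -
    have "finite ((\<lambda>W. cov A n W) ` ?F)" using f by (rule finite_imageI)
    moreover have "(\<lambda>W. cov A n W) ` ?F \<noteq> {}" using ne by blast
    ultimately show ?thesis unfolding opt_cov_def by (rule Max_in)
  qed
  then obtain Ob where h: "Ob \<in> {W. W \<subseteq> C \<and> card W = k}" "opt_cov A n C k = cov A n Ob"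
    by (rule imageE)
  show ?thesis
  proof (intro exI conjI)
    show "Ob \<subseteq> C" "card Ob = k" using h(1) by simp_all
    show "cov A n Ob = opt_cov A n C k" using h(2) by simp
  qed
qed

lemma greedy:
  assumes "seqcc_completion A n C k S S'"
    and "finite C" "k \<le> card C" "1 \<le> k" "S \<subseteq> C"
  shows "real (opt_cov A n C k) - cov A n S' \<le> (1 - 1 / real k) ^ (k - card S) * (real (opt_cov A n C k) - cov A n S)"
  using assms
proof (induction rule: seqcc_completion.induct)
  case (finish W)
  then show ?case by simp
next
  case (step W c W')
  let ?q = "1 - 1 / real k"
  let ?Ob = "real (opt_cov A n C k)"
  obtain Ob where Ob: "Ob \<subseteq> C" "card Ob = k" "cov A n Ob = opt_cov A n C k"
    using Max_opt[OF step.prems(1,2)] by blast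
  have finO: "finite Ob" using Ob(1) step.prems(1) finite_subset by blast
  have g: "cov A n Ob \<le> cov A n W + k * (cov A n (insert c W) - cov A n W)"
    by (rule gain_nat[OF finO Ob(2) step.hyps(2) Ob(1) step.hyps(3)])
  have mono: "cov A n W \<le> cov A n (insert c W)" by (rule cov_mono) auto
  have "real (cov A n Ob) \<le> real (cov A n W + k * (cov A n (insert c W) - cov A n W))"
    using g by (rule of_nat_mono)
  also have "\<dots> = real (cov A n W) + real k * (real (cov A n (insert c W)) - real (cov A n W))"
    using mono by (simp add: of_nat_diff)
  finally have g': "?Ob - cov A n W \<le> real k * (real (cov A n (insert c W)) - cov A n W)"
    using Ob(3) by simp
  have k0: "real k > 0" using step.prems by simp
  have one: "?Ob - cov A n (insert c W) \<le> ?q * (?Ob - cov A n W)"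
  proof -
    have "(?Ob - cov A n W) / real k \<le> real (cov A n (insert c W)) - cov A n W"
      using g' k0 by (simp add: divide_le_eq mult.commute)
    moreover have "?q * (?Ob - cov A n W) = (?Ob - cov A n W) - (?Ob - cov A n W) / real k"
      by (simp add: left_diff_distrib)
    ultimately show ?thesis by linarith
  qed
  have finW: "finite W" using step.prems(1,4) finite_subset by blast
  have cW: "card (insert c W) = Suc (card W)" using finW step.hyps(2) by simp
  have IH: "?Ob - cov A n W' \<le> ?q ^ (k - card (insert c W)) * (?Ob - cov A n (insert c W))"
    using step.IH step.prems step.hyps(2) by auto
  have q0: "?q \<ge> 0" using step.prems by simp
  have "?q ^ (k - card (insert c W)) * (?Ob - cov A n (insert c W)) \<le> ?q ^ (k - card (insert c W)) * (?q * (?Ob - cov A n W))"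
    using one q0 by (intro mult_left_mono) auto
  also have "\<dots> = ?q ^ (k - card W) * (?Ob - cov A n W)"
  proof -
    have e: "k - card W = Suc (k - card (insert c W))" using cW step.hyps(1) by simp
    show ?thesis unfolding e by (simp add: mult.commute mult.left_commute)
  qed
  finally show ?case using IH by linarith
qed

theorem theorem5:
  fixes A :: "nat \<Rightarrow> 'c set" and n k :: nat and C W Wbar :: "'c set"
  assumes "finite C" and "C \<noteq> {}"
    and "n \<ge> 1"
    and "\<forall>i\<in>{1..n}. A i \<subseteq> C"
    and "1 \<le> k" and "k \<le> card C"
    and "W \<subseteq> C" and "card W \<le> k"
    and "affordable A n C k W"
    and "seqcc_completion A n C k W Wbar"
  shows "real (cov A n Wbar) \<ge> (1 - 1 / exp 1) * real (opt_cov A n C k)"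
proof -
  let ?q = "1 - 1 / real k"
  let ?O = "real (opt_cov A n C k)"
  define V where "V = {i \<in> {1..n}. A i \<inter> W \<noteq> {}}"
  have cvW: "cov A n W = card V" unfolding V_def cov_def by simp
  obtain p :: "nat \<Rightarrow> 'c \<Rightarrow> real" where
    p1: "\<forall>i\<in>{1..n}. \<forall>c\<in>C. p i c \<ge> 0" and
    p2: "\<forall>i\<in>{1..n}. \<forall>c\<in>C. c \<notin> A i \<longrightarrow> p i c = 0" and
    p3: "\<forall>i\<in>{1..n}. (\<Sum>c\<in>C. p i c) \<le> real k / real n" and
    p4: "\<forall>c\<in>W. (\<Sum>i\<in>{1..n}. p i c) = 1"
    using assms(9) unfolding affordable_def by blast
  have finW: "finite W" using assms(1,7) finite_subset by blast
  have "(\<Sum>c\<in>W. \<Sum>i\<in>{1..n}. p i c) = (\<Sum>c\<in>W. (1::real))"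
    by (rule sum.cong[OF refl]) (rule p4[rule_format])
  hence "real (card W) = (\<Sum>c\<in>W. \<Sum>i\<in>{1..n}. p i c)" by simp
  also have "\<dots> = (\<Sum>i\<in>{1..n}. \<Sum>c\<in>W. p i c)" by (rule sum.swap)
  also have "\<dots> = (\<Sum>i\<in>V. \<Sum>c\<in>W. p i c)"
  proof (rule sum.mono_neutral_right)
    show "V \<subseteq> {1..n}" unfolding V_def by auto
    show "\<forall>i\<in>{1..n} - V. (\<Sum>c\<in>W. p i c) = 0"
    proof
      fix i assume i: "i \<in> {1..n} - V"
      have "p i c = 0" if c: "c \<in> W" for c
      proof -
        have "i \<in> {1..n}" "A i \<inter> W = {}" using i unfolding V_def by auto
        moreover have "c \<in> C" using c assms(7) by blast
        ultimately show ?thesis using p2 c by blast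
      qed
      hence "\<forall>c\<in>W. p i c = 0" by blast
      thus "(\<Sum>c\<in>W. p i c) = 0" by simp
    qed
  qed simp
  also have "\<dots> \<le> (\<Sum>i\<in>V. real k / real n)"
  proof (rule sum_mono)
    fix i assume i: "i \<in> V"
    hence i': "i \<in> {1..n}" unfolding V_def by auto
    have "(\<Sum>c\<in>W. p i c) \<le> (\<Sum>c\<in>C. p i c)"
    proof (rule sum_mono2[OF assms(1) assms(7)])
      fix b assume "b \<in> C - W"
      thus "0 \<le> p i b" using p1 i' by blast
    qed
    moreover have "(\<Sum>c\<in>C. p i c) \<le> real k / real n" using p3 i' by blast
    ultimately show "(\<Sum>c\<in>W. p i c) \<le> real k / real n" by linarith
  qed
  also have "\<dots> = real (cov A n W) * real k / real n" using cvW by simp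
  finally have jle: "real (card W) \<le> real (cov A n W) * real k / real n" .
  have n0: "real n > 0" and k0: "real k > 0" using assms(3,5) by auto
  have c1: "real (card W) * real n / real k \<le> real (cov A n W)"
  proof -
    have "real (card W) * real n \<le> real (cov A n W) * real k"
      using jle n0 by (simp add: pos_le_divide_eq)
    thus ?thesis using k0 by (simp add: pos_divide_le_eq)
  qed
  obtain Ob where Ob: "Ob \<subseteq> C" "card Ob = k" "cov A n Ob = opt_cov A n C k"
    using Max_opt[OF assms(1,6)] by blast
  have On: "?O \<le> real n" using cov_le_n[of A n Ob] Ob(3) by simp
  have O0: "?O \<ge> 0" by simp
  have "?O * (real (card W) / real k) \<le> real n * (real (card W) / real k)"
    using On by (intro mult_right_mono) auto
  hence gW: "?O - cov A n W \<le> ?O * (1 - real (card W) / real k)"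
  proof -
    have "real n * (real (card W) / real k) = real (card W) * real n / real k" by simp
    moreover have "?O * (1 - real (card W) / real k) = ?O - ?O * (real (card W) / real k)"
      by (simp add: right_diff_distrib)
    ultimately show ?thesis using c1 \<open>?O * (real (card W) / real k) \<le> real n * (real (card W) / real k)\<close>
      by linarith
  qed
  have q0: "?q \<ge> 0" using assms(5) by simp
  have bern: "1 - real (card W) / real k \<le> ?q ^ card W"
  proof -
    have "- 1 \<le> - 1 / real k" using assms(5) by (simp add: divide_le_eq)
    from Bernoulli_inequality[OF this, of "card W"]
    have "1 + real (card W) * (- 1 / real k) \<le> (1 + - 1 / real k) ^ card W" .
    moreover have "1 + real (card W) * (- 1 / real k) = 1 - real (card W) / real k" by simp
    moreover have "1 + - 1 / real k = ?q" by simp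
    ultimately show ?thesis by simp
  qed
  have G: "?O - cov A n Wbar \<le> ?q ^ (k - card W) * (?O - cov A n W)"
    by (rule greedy[OF assms(10) assms(1) assms(6) assms(5) assms(7)])
  also have "\<dots> \<le> ?q ^ (k - card W) * (?O * (1 - real (card W) / real k))"
    using gW q0 by (intro mult_left_mono) auto
  also have "\<dots> \<le> ?q ^ (k - card W) * (?O * ?q ^ card W)"
    using bern q0 O0 by (intro mult_left_mono) auto
  also have "\<dots> = ?O * ?q ^ k"
  proof -
    have "?q ^ (k - card W) * ?q ^ card W = ?q ^ k"
      using assms(8) by (simp add: power_add[symmetric])
    thus ?thesis by (simp add: ac_simps)
  qed
  also have "\<dots> \<le> ?O * exp (-1)"
  proof (rule mult_left_mono[OF _ O0])
    have "?q \<le> exp (- 1 / real k)" using exp_ge_add_one_self[of "- 1 / real k"] by simp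
    hence "?q ^ k \<le> exp (- 1 / real k) ^ k" using q0 by (rule power_mono)
    also have "\<dots> = exp (real k * (- 1 / real k))" by (rule exp_of_nat_mult[symmetric])
    also have "\<dots> = exp (-1)" using k0 by simp
    finally show "?q ^ k \<le> exp (-1)" .
  qed
  finally have "?O - cov A n Wbar \<le> ?O * exp (-1)" .
  moreover have "(1 - 1 / exp 1) * ?O = ?O - ?O * exp (-1)"
  proof -
    have "1 / exp 1 = exp (-1::real)" by (simp add: exp_minus inverse_eq_divide)
    thus ?thesis by (simp add: left_diff_distrib)
  qed
  ultimately show ?thesis by linarith
qed

end
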